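(* In a $\mathsf{B3}$-category, $\Pi_{\mathbf f}=e_1=e_2=\amalg_{\mathbf t}$, where $e_1=\rho_{\mathbf t}\circ(\check\lambda_{\mathbf t}\wedge\check\rho_{\mathbf t})\circ m_{\mathbf f,\mathbf t,\mathbf t,\mathbf f}\circ(\rho_{\mathbf f}^{-1}\vee\lambda_{\mathbf f}^{-1})\circ\check\lambda_{\mathbf f}^{-1}$ and $e_2=\rho_{\mathbf t}\circ(\check\rho_{\mathbf t}\wedge\check\lambda_{\mathbf t})\circ m_{\mathbf t,\mathbf f,\mathbf f,\mathbf t}\circ(\lambda_{\mathbf f}^{-1}\vee\rho_{\mathbf f}^{-1})\circ\check\lambda_{\mathbf f}^{-1}$ (maps $\mathbf f\to\mathbf t$). In particular every $\mathsf{B3}$-category is single-mixed.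
   Context: A *-autonomous category is a symmetric monoidal category $(\mathcal C,\wedge,\mathbf t)$ with natural isomorphisms $\alpha,\sigma$, $\rho_A\colon A\wedge\mathbf t\to A$, $\lambda_A\colon\mathbf t\wedge A\to A$, a contravariant functor $A\mapsto\bar A$ with natural isomorphism $\bar{\bar A}\cong A$, and a natural bijection $\mathrm{Hom}(A\wedge B,C)\cong\mathrm{Hom}(A,\bar B\vee C)$, where $A\vee B:=\overline{\bar B\wedge\bar A}$, $\mathbf f:=\bar{\mathbf t}$; $\vee$ is symmetric monoidal with unit isomorphisms $\check\rho_A\colon A\vee\mathbf f\to A$, $\check\lambda_A\colon\mathbf f\vee A\to A$. A $\mathsf{B1}$-category is a *-autonomous category such that (1) there is a Boolean algebra $\mathcal B$ and a function $F$ from objects to $\mathcal B$ with $F(A)\le F(B)$ iff $\mathrm{Hom}(A,B)\ne\emptyset$, and (2) every object $A$ carries a cocommutative $\wedge$-comonoid $\Delta_A\colon A\to A\wedge A$, $\Pi_A\colon A\to\mathbf t$; dually each object has a commutative $\vee$-monoid $\nabla_A\colon A\vee A\to A$, $\amalg_A\colon\mathbf f\to A$ (duals of $\Delta_{\bar A},\Pi_{\bar A}$). A $\mathsf{B2}$-category is a $\mathsf{B1}$-category with $\Pi_{\mathbf t}=\mathrm{id}_{\mathbf t}$ and $\Delta_{A\wedge B}=(A\wedge\sigma_{A,B}\wedge B)\circ(\Delta_A\wedge\Delta_B)$ (modulo associativity). A $\mathsf{B3}$-category is a $\mathsf{B2}$-category with: a medial map $m_{A,B,C,D}\colon(A\wedge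 B)\vee(C\wedge D)\to(A\vee C)\wedge(B\vee D)$ for all $A,B,C,D$, natural in all arguments, self-dual ($\overline{m_{A,B,C,D}}$ corresponds to $m_{\bar D,\bar B,\bar C,\bar A}$ under canonical isomorphisms), with $\Delta_{A\vee B}=m_{A,A,B,B}\circ(\Delta_A\vee\Delta_B)$; a nullary medial $\mathrm{nm}\colon\mathbf t\vee\mathbf t\to\mathbf t$ with $\Pi_{A\vee B}=\mathrm{nm}\circ(\Pi_A\vee\Pi_B)$ for all $A,B$; and $\Pi_{\mathbf t\vee\mathbf t}=\mathrm{nm}=\nabla_{\mathbf t}$. A $\mathsf{B1}$-category is single-mixed if $\Pi_{\mathbf f}=\amalg_{\mathbf t}$. *)

theory Defs
  imports Main
begin

text \<open>A category with all elements of type 'o as objects and all elements of type 'm as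
arrows (an arrow f goes from cdom f to ccod f); composition "ccomp g f" means g after f.\<close>

record ('o, 'm) sacat =
  cdom   :: "'m \<Rightarrow> 'o"
  ccod   :: "'m \<Rightarrow> 'o"
  cid    :: "'o \<Rightarrow> 'm"
  ccomp  :: "'m \<Rightarrow> 'm \<Rightarrow> 'm"
  tob    :: "'o \<Rightarrow> 'o \<Rightarrow> 'o"
  tar    :: "'m \<Rightarrow> 'm \<Rightarrow> 'm"
  tunit  :: "'o"
  calpha :: "'o \<Rightarrow> 'o \<Rightarrow> 'o \<Rightarrow> 'm"
  csigma :: "'o \<Rightarrow> 'o \<Rightarrow> 'm"
  crho   :: "'o \<Rightarrow> 'm"
  clam   :: "'o \<Rightarrow> 'm"
  bob    :: "'o \<Rightarrow> 'o"
  bar    :: "'m \<Rightarrow> 'm"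
  ceps   :: "'o \<Rightarrow> 'm"
  ccur   :: "'o \<Rightarrow> 'o \<Rightarrow> 'o \<Rightarrow> 'm \<Rightarrow> 'm"
  cdelta :: "'o \<Rightarrow> 'm"
  cpi    :: "'o \<Rightarrow> 'm"
  cmed   :: "'o \<Rightarrow> 'o \<Rightarrow> 'o \<Rightarrow> 'o \<Rightarrow> 'm"
  cnm    :: "'m"

definition hom :: "('o, 'm, 'z) sacat_scheme \<Rightarrow> 'o \<Rightarrow> 'o \<Rightarrow> 'm set" where
  "hom C A B = {f. cdom C f = A \<and> ccod C f = B}"

definition is_inverse :: "('o, 'm, 'z) sacat_scheme \<Rightarrow> 'm \<Rightarrow> 'm \<Rightarrow> bool" where
  "is_inverse C f g \<longleftrightarrow> g \<in> hom C (ccod C f) (cdom C f)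
     \<and> ccomp C g f = cid C (cdom C f) \<and> ccomp C f g = cid C (ccod C f)"

definition isom :: "('o, 'm, 'z) sacat_scheme \<Rightarrow> 'm \<Rightarrow> bool" where
  "isom C f \<longleftrightarrow> (\<exists>g. is_inverse C f g)"

definition invm :: "('o, 'm, 'z) sacat_scheme \<Rightarrow> 'm \<Rightarrow> 'm" where
  "invm C f = (THE g. is_inverse C f g)"

definition vob :: "('o, 'm, 'z) sacat_scheme \<Rightarrow> 'o \<Rightarrow> 'o \<Rightarrow> 'o" where
  "vob C A B = bob C (tob C (bob C B) (bob C A))"

definition var :: "('o, 'm, 'z) sacat_scheme \<Rightarrow> 'm \<Rightarrow> 'm \<Rightarrow> 'm" where
  "var C f g = bar C (tar C (bar C g) (bar C f))"

definition fob :: "('o, 'm, 'z) sacat_scheme \<Rightarrow> 'o" where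
  "fob C = bob C (tunit C)"

text \<open>Unit isomorphisms of \<or> (De Morgan duals of those of \<and>):
 rhoV A : A \<or> f \<rightarrow> A,  lamV A : f \<or> A \<rightarrow> A.\<close>

definition rhoV :: "('o, 'm, 'z) sacat_scheme \<Rightarrow> 'o \<Rightarrow> 'm" where
  "rhoV C A = ccomp C (ceps C A)
     (invm C (bar C (ccomp C (clam C (bob C A)) (tar C (ceps C (tunit C)) (cid C (bob C A))))))"

definition lamV :: "('o, 'm, 'z) sacat_scheme \<Rightarrow> 'o \<Rightarrow> 'm" where
  "lamV C A = ccomp C (ceps C A)
     (invm C (bar C (ccomp C (crho C (bob C A)) (tar C (cid C (bob C A)) (ceps C (tunit C))))))"

text \<open>The \<or>-monoid: duals of \<Delta>_{bar A} and \<Pi>_{bar A}.\<close>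

definition cnabla :: "('o, 'm, 'z) sacat_scheme \<Rightarrow> 'o \<Rightarrow> 'm" where
  "cnabla C A = ccomp C (ceps C A) (bar C (cdelta C (bob C A)))"

definition camalg :: "('o, 'm, 'z) sacat_scheme \<Rightarrow> 'o \<Rightarrow> 'm" where
  "camalg C A = ccomp C (ceps C A) (bar C (cpi C (bob C A)))"

definition category :: "('o, 'm, 'z) sacat_scheme \<Rightarrow> bool" where
  "category C \<longleftrightarrow>
     (\<forall>A. cid C A \<in> hom C A A)
   \<and> (\<forall>f g A B D. f \<in> hom C A B \<longrightarrow> g \<in> hom C B D \<longrightarrow> ccomp C g f \<in> hom C A D)
   \<and> (\<forall>f A B. f \<in> hom C A B \<longrightarrow> ccomp C f (cid C A) = f \<and> ccomp C (cid C B) f = f)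
   \<and> (\<forall>f g h A B D E. f \<in> hom C A B \<longrightarrow> g \<in> hom C B D \<longrightarrow> h \<in> hom C D E \<longrightarrow>
        ccomp C h (ccomp C g f) = ccomp C (ccomp C h g) f)"

definition sym_monoidal :: "('o, 'm, 'z) sacat_scheme \<Rightarrow> bool" where
  "sym_monoidal C \<longleftrightarrow> category C
   \<comment> \<open>tensor is a bifunctor\<close>
   \<and> (\<forall>f g A B A' B'. f \<in> hom C A B \<longrightarrow> g \<in> hom C A' B' \<longrightarrow>
        tar C f g \<in> hom C (tob C A A') (tob C B B'))
   \<and> (\<forall>A B. tar C (cid C A) (cid C B) = cid C (tob C A B))
   \<and> (\<forall>f f' g g' A B D A' B' D'. f \<in> hom C A B \<longrightarrow> f' \<in> hom C B D \<longrightarrow>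
        g \<in> hom C A' B' \<longrightarrow> g' \<in> hom C B' D' \<longrightarrow>
        tar C (ccomp C f' f) (ccomp C g' g) = ccomp C (tar C f' g') (tar C f g))
   \<comment> \<open>associator: natural isomorphism\<close>
   \<and> (\<forall>A B D. calpha C A B D \<in> hom C (tob C (tob C A B) D) (tob C A (tob C B D))
              \<and> isom C (calpha C A B D))
   \<and> (\<forall>f g h A B D A' B' D'. f \<in> hom C A A' \<longrightarrow> g \<in> hom C B B' \<longrightarrow> h \<in> hom C D D' \<longrightarrow>
        ccomp C (calpha C A' B' D') (tar C (tar C f g) h)
        = ccomp C (tar C f (tar C g h)) (calpha C A B D))
   \<comment> \<open>unitors: natural isomorphisms\<close>
   \<and> (\<forall>A. crho C A \<in> hom C (tob C A (tunit C)) A \<and> isom C (crho C A))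
   \<and> (\<forall>A. clam C A \<in> hom C (tob C (tunit C) A) A \<and> isom C (clam C A))
   \<and> (\<forall>f A B. f \<in> hom C A B \<longrightarrow>
        ccomp C (crho C B) (tar C f (cid C (tunit C))) = ccomp C f (crho C A)
      \<and> ccomp C (clam C B) (tar C (cid C (tunit C)) f) = ccomp C f (clam C A))
   \<comment> \<open>symmetry: natural, involutive\<close>
   \<and> (\<forall>A B. csigma C A B \<in> hom C (tob C A B) (tob C B A))
   \<and> (\<forall>f g A B A' B'. f \<in> hom C A B \<longrightarrow> g \<in> hom C A' B' \<longrightarrow>
        ccomp C (csigma C B B') (tar C f g) = ccomp C (tar C g f) (csigma C A A'))
   \<and> (\<forall>A B. ccomp C (csigma C B A) (csigma C A B) = cid C (tob C A B))
   \<comment> \<open>pentagon\<close>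
   \<and> (\<forall>A B D E.
        ccomp C (calpha C A B (tob C D E)) (calpha C (tob C A B) D E)
        = ccomp C (tar C (cid C A) (calpha C B D E))
            (ccomp C (calpha C A (tob C B D) E) (tar C (calpha C A B D) (cid C E))))
   \<comment> \<open>triangle\<close>
   \<and> (\<forall>A B. ccomp C (tar C (cid C A) (clam C B)) (calpha C A (tunit C) B)
             = tar C (crho C A) (cid C B))
   \<comment> \<open>hexagon\<close>
   \<and> (\<forall>A B D.
        ccomp C (calpha C B D A) (ccomp C (csigma C A (tob C B D)) (calpha C A B D))
        = ccomp C (tar C (cid C B) (csigma C A D))
            (ccomp C (calpha C B A D) (tar C (csigma C A B) (cid C D))))"

definition star_autonomous :: "('o, 'm, 'z) sacat_scheme \<Rightarrow> bool" where
  "star_autonomous C \<longleftrightarrow> sym_monoidal C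
   \<comment> \<open>bar is a contravariant functor\<close>
   \<and> (\<forall>f A B. f \<in> hom C A B \<longrightarrow> bar C f \<in> hom C (bob C B) (bob C A))
   \<and> (\<forall>A. bar C (cid C A) = cid C (bob C A))
   \<and> (\<forall>f g A B D. f \<in> hom C A B \<longrightarrow> g \<in> hom C B D \<longrightarrow>
        bar C (ccomp C g f) = ccomp C (bar C f) (bar C g))
   \<comment> \<open>natural isomorphism bar bar A \<cong> A\<close>
   \<and> (\<forall>A. ceps C A \<in> hom C (bob C (bob C A)) A \<and> isom C (ceps C A))
   \<and> (\<forall>f A B. f \<in> hom C A B \<longrightarrow>
        ccomp C f (ceps C A) = ccomp C (ceps C B) (bar C (bar C f)))
   \<comment> \<open>natural bijection Hom(A \<and> B, D) \<cong> Hom(A, bar B \<or> D)\<close>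
   \<and> (\<forall>A B D. bij_betw (ccur C A B D) (hom C (tob C A B) D) (hom C A (vob C (bob C B) D)))
   \<and> (\<forall>a f A' A B D. a \<in> hom C A' A \<longrightarrow> f \<in> hom C (tob C A B) D \<longrightarrow>
        ccur C A' B D (ccomp C f (tar C a (cid C B))) = ccomp C (ccur C A B D f) a)
   \<and> (\<forall>b f A B' B D. b \<in> hom C B' B \<longrightarrow> f \<in> hom C (tob C A B) D \<longrightarrow>
        ccur C A B' D (ccomp C f (tar C (cid C A) b))
        = ccomp C (var C (bar C b) (cid C D)) (ccur C A B D f))
   \<and> (\<forall>c f A B D D'. c \<in> hom C D D' \<longrightarrow> f \<in> hom C (tob C A B) D \<longrightarrow>
        ccur C A B D' (ccomp C c f)
        = ccomp C (var C (cid C (bob C B)) c) (ccur C A B D f))"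

definition B1 :: "('o, 'm, 'z) sacat_scheme \<Rightarrow> ('o \<Rightarrow> 'b::boolean_algebra) \<Rightarrow> bool" where
  "B1 C F \<longleftrightarrow> star_autonomous C
   \<and> (\<forall>A B. F A \<le> F B \<longleftrightarrow> hom C A B \<noteq> {})
   \<comment> \<open>every object carries a cocommutative \<and>-comonoid\<close>
   \<and> (\<forall>A. cdelta C A \<in> hom C A (tob C A A) \<and> cpi C A \<in> hom C A (tunit C))
   \<and> (\<forall>A. ccomp C (calpha C A A A) (ccomp C (tar C (cdelta C A) (cid C A)) (cdelta C A))
          = ccomp C (tar C (cid C A) (cdelta C A)) (cdelta C A))
   \<and> (\<forall>A. ccomp C (clam C A) (ccomp C (tar C (cpi C A) (cid C A)) (cdelta C A)) = cid C A)
   \<and> (\<forall>A. ccomp C (crho C A) (ccomp C (tar C (cid C A) (cpi C A)) (cdelta C A)) = cid C A)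
   \<and> (\<forall>A. ccomp C (csigma C A A) (cdelta C A) = cdelta C A)"

text \<open>Canonical map (A\<and>A)\<and>(B\<and>B) \<rightarrow> (A\<and>B)\<and>(A\<and>B) built from associators and
  the symmetry on the middle factors.\<close>

definition shuffle :: "('o, 'm, 'z) sacat_scheme \<Rightarrow> 'o \<Rightarrow> 'o \<Rightarrow> 'm" where
  "shuffle C A B =
     ccomp C (invm C (calpha C A B (tob C A B)))
    (ccomp C (tar C (cid C A) (calpha C B A B))
    (ccomp C (tar C (cid C A) (tar C (csigma C A B) (cid C B)))
    (ccomp C (tar C (cid C A) (invm C (calpha C A B B)))
             (calpha C A A (tob C B B)))))"

definition B2 :: "('o, 'm, 'z) sacat_scheme \<Rightarrow> ('o \<Rightarrow> 'b::boolean_algebra) \<Rightarrow> bool" where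
  "B2 C F \<longleftrightarrow> B1 C F
   \<and> cpi C (tunit C) = cid C (tunit C)
   \<and> (\<forall>A B. cdelta C (tob C A B) = ccomp C (shuffle C A B) (tar C (cdelta C A) (cdelta C B)))"

text \<open>Self-duality of the medial: the canonical isomorphisms
  bar((A\<or>C)\<and>(B\<or>D)) \<rightarrow> (bar D\<and>bar B)\<or>(bar C\<and>bar A) and
  bar((A\<and>B)\<or>(C\<and>D)) \<rightarrow> (bar D\<or>bar C)\<and>(bar B\<or>bar A).
  dmt P Q : bar(P\<and>Q) \<rightarrow> bar Q \<or> bar P.\<close>

definition dmt :: "('o, 'm, 'z) sacat_scheme \<Rightarrow> 'o \<Rightarrow> 'o \<Rightarrow> 'm" where
  "dmt C P Q = bar C (tar C (ceps C P) (ceps C Q))"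

definition medial_selfdual :: "('o, 'm, 'z) sacat_scheme \<Rightarrow> bool" where
  "medial_selfdual C \<longleftrightarrow> (\<forall>A B D E.
     ccomp C (tar C (dmt C D E) (dmt C A B))
       (ccomp C (ceps C (tob C (bob C (tob C D E)) (bob C (tob C A B))))
                (bar C (cmed C A B D E)))
     = ccomp C (cmed C (bob C E) (bob C B) (bob C D) (bob C A))
         (ccomp C (var C (ceps C (tob C (bob C E) (bob C B)))
                         (ceps C (tob C (bob C D) (bob C A))))
                  (dmt C (vob C A D) (vob C B E))))"

definition B3 :: "('o, 'm, 'z) sacat_scheme \<Rightarrow> ('o \<Rightarrow> 'b::boolean_algebra) \<Rightarrow> bool" where
  "B3 C F \<longleftrightarrow> B2 C F
   \<comment> \<open>medial map m_{A,B,D,E} : (A\<and>B)\<or>(D\<and>E) \<rightarrow> (A\<or>D)\<and>(B\<or>E), natural in all arguments\<close>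
   \<and> (\<forall>A B D E. cmed C A B D E \<in>
        hom C (vob C (tob C A B) (tob C D E)) (tob C (vob C A D) (vob C B E)))
   \<and> (\<forall>f1 f2 f3 f4 A B D E A' B' D' E'.
        f1 \<in> hom C A A' \<longrightarrow> f2 \<in> hom C B B' \<longrightarrow> f3 \<in> hom C D D' \<longrightarrow> f4 \<in> hom C E E' \<longrightarrow>
        ccomp C (cmed C A' B' D' E') (var C (tar C f1 f2) (tar C f3 f4))
        = ccomp C (tar C (var C f1 f3) (var C f2 f4)) (cmed C A B D E))
   \<and> medial_selfdual C
   \<and> (\<forall>A B. cdelta C (vob C A B) = ccomp C (cmed C A A B B) (var C (cdelta C A) (cdelta C B)))
   \<comment> \<open>nullary medial nm : t\<or>t \<rightarrow> t\<close>
   \<and> cnm C \<in> hom C (vob C (tunit C) (tunit C)) (tunit C)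
   \<and> (\<forall>A B. cpi C (vob C A B) = ccomp C (cnm C) (var C (cpi C A) (cpi C B)))
   \<and> cpi C (vob C (tunit C) (tunit C)) = cnm C
   \<and> cnm C = cnabla C (tunit C)"

definition single_mixed :: "('o, 'm, 'z) sacat_scheme \<Rightarrow> bool" where
  "single_mixed C \<longleftrightarrow> cpi C (fob C) = camalg C (tunit C)"

definition e1 :: "('o, 'm, 'z) sacat_scheme \<Rightarrow> 'm" where
  "e1 C = ccomp C (crho C (tunit C))
     (ccomp C (tar C (lamV C (tunit C)) (rhoV C (tunit C)))
     (ccomp C (cmed C (fob C) (tunit C) (tunit C) (fob C))
     (ccomp C (var C (invm C (crho C (fob C))) (invm C (clam C (fob C))))
              (invm C (lamV C (fob C))))))"

definition e2 :: "('o, 'm, 'z) sacat_scheme \<Rightarrow> 'm" where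
  "e2 C = ccomp C (crho C (tunit C))
     (ccomp C (tar C (rhoV C (tunit C)) (lamV C (tunit C)))
     (ccomp C (cmed C (tunit C) (fob C) (fob C) (tunit C))
     (ccomp C (var C (invm C (clam C (fob C))) (invm C (crho C (fob C))))
              (invm C (lamV C (fob C))))))"

end

theory Submission
  imports Defs
begin

locale b3 =
  fixes C :: "('o, 'm) sacat" and F :: "'o \<Rightarrow> 'b::boolean_algebra"
  assumes B3: "B3 C F"
begin

abbreviation cp (infixr "\<cdot>" 55) where "g \<cdot> f \<equiv> ccomp C g f"
abbreviation "dm f \<equiv> cdom C f"
abbreviation "cd f \<equiv> ccod C f"
abbreviation "T f g \<equiv> tar C f g"
abbreviation "Bb f \<equiv> bar C f"
abbreviation "Bo A \<equiv> bob C A"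
abbreviation "ep A \<equiv> ceps C A"
abbreviation "tt \<equiv> tunit C"
abbreviation "ID A \<equiv> cid C A"
abbreviation "V f g \<equiv> var C f g"
abbreviation "iv f \<equiv> invm C f"
abbreviation "rh A \<equiv> crho C A"
abbreviation "la A \<equiv> clam C A"
abbreviation "tb A B \<equiv> tob C A B"
abbreviation "isoC f \<equiv> isom C f"

lemma B2: "B2 C F" using B3 unfolding B3_def by blast
lemma B1: "B1 C F" using B2 unfolding B2_def by blast
lemma SA: "star_autonomous C" using B1 unfolding B1_def by blast
lemma SM: "sym_monoidal C" using SA unfolding star_autonomous_def by blast
lemma CAT: "category C" using SM unfolding sym_monoidal_def by blast

lemma arr_hom: "f \<in> hom C (cdom C f) (ccod C f)" by (simp add: hom_def)

lemma id_dom[simp]: "dm (ID A) = A" and id_cod[simp]: "cd (ID A) = A"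
  using CAT unfolding category_def hom_def by auto

lemma comp_dom[simp]: "cd f = dm g \<Longrightarrow> dm (g \<cdot> f) = dm f"
  and comp_cod[simp]: "cd f = dm g \<Longrightarrow> cd (g \<cdot> f) = cd g"
proof -
  assume a: "cd f = dm g"
  have c2: "\<forall>f g A B D. f \<in> hom C A B \<longrightarrow> g \<in> hom C B D \<longrightarrow> ccomp C g f \<in> hom C A D"
    using CAT unfolding category_def by (elim conjE) assumption
  have "g \<cdot> f \<in> hom C (dm f) (cd g)"
    using c2[rule_format, OF arr_hom[of f]] a arr_hom[of g] by simp
  then show "dm (g \<cdot> f) = dm f" "cd (g \<cdot> f) = cd g"
    by (auto simp: hom_def)
qed

lemma comp_id_r[simp]: "dm f = A \<Longrightarrow> f \<cdot> ID A = f"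
  and comp_id_l[simp]: "cd f = B \<Longrightarrow> ID B \<cdot> f = f"
  using CAT unfolding category_def hom_def by auto

lemma c4: "\<forall>f g h A B D E. f \<in> hom C A B \<longrightarrow> g \<in> hom C B D \<longrightarrow> h \<in> hom C D E \<longrightarrow>
        ccomp C h (ccomp C g f) = ccomp C (ccomp C h g) f"
    using CAT unfolding category_def by (elim conjE) assumption

lemma assoc[simp]: "cd f = dm g \<Longrightarrow> cd g = dm h \<Longrightarrow> (h \<cdot> g) \<cdot> f = h \<cdot> (g \<cdot> f)"
  using c4[rule_format, where f=f and g=g and h=h and A="dm f" and B="cd f" and D="cd g" and E="cd h"] by (simp add: hom_def)

lemma SMfacts1: "\<forall>f g A B A' B'. f \<in> hom C A B \<longrightarrow> g \<in> hom C A' B' \<longrightarrow> tar C f g \<in> hom C (tob C A A') (tob C B B')"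
  using SM unfolding sym_monoidal_def by (elim conjE) assumption

lemma SMfacts2: "\<forall>A B. tar C (cid C A) (cid C B) = cid C (tob C A B)"
  using SM unfolding sym_monoidal_def by (elim conjE) assumption

lemma SMfacts3: "\<forall>f f' g g' A B D A' B' D'. f \<in> hom C A B \<longrightarrow> f' \<in> hom C B D \<longrightarrow>
        g \<in> hom C A' B' \<longrightarrow> g' \<in> hom C B' D' \<longrightarrow>
        tar C (ccomp C f' f) (ccomp C g' g) = ccomp C (tar C f' g') (tar C f g)"
  using SM unfolding sym_monoidal_def by (elim conjE) assumption

lemma SMfacts4: "\<forall>A. crho C A \<in> hom C (tob C A (tunit C)) A \<and> isom C (crho C A)"
  using SM unfolding sym_monoidal_def by (elim conjE) assumption

lemma SMfacts5: "\<forall>A. clam C A \<in> hom C (tob C (tunit C) A) A \<and> isom C (clam C A)"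
  using SM unfolding sym_monoidal_def by (elim conjE) assumption

lemma SMfacts6: "\<forall>f A B. f \<in> hom C A B \<longrightarrow>
        ccomp C (crho C B) (tar C f (cid C (tunit C))) = ccomp C f (crho C A)
      \<and> ccomp C (clam C B) (tar C (cid C (tunit C)) f) = ccomp C f (clam C A)"
  using SM unfolding sym_monoidal_def by (elim conjE) assumption

lemma tar_hom: "T f g \<in> hom C (tb (dm f) (dm g)) (tb (cd f) (cd g))"
  using SMfacts1[rule_format, where f=f and g=g and A="dm f" and B="cd f" and A'="dm g" and B'="cd g"]
  by (simp add: hom_def)
lemma tar_dom[simp]: "dm (T f g) = tb (dm f) (dm g)" using tar_hom by (simp add: hom_def)
lemma tar_cod[simp]: "cd (T f g) = tb (cd f) (cd g)" using tar_hom by (simp add: hom_def)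

lemma tar_id[simp]: "T (ID A) (ID B) = ID (tb A B)" using SMfacts2 by blast

lemma tar_comp: "cd f = dm f' \<Longrightarrow> cd g = dm g' \<Longrightarrow> T (f' \<cdot> f) (g' \<cdot> g) = T f' g' \<cdot> T f g"
  using SMfacts3[rule_format, where f=f and f'=f' and g=g and g'=g' and A="dm f" and B="cd f" and D="cd f'"
    and A'="dm g" and B'="cd g" and D'="cd g'"] by (simp add: hom_def)

lemma rh_dom[simp]: "dm (rh A) = tb A tt" and rh_cod[simp]: "cd (rh A) = A" and rh_iso[simp]: "isoC (rh A)"
  using SMfacts4 by (simp_all add: hom_def)
lemma la_dom[simp]: "dm (la A) = tb tt A" and la_cod[simp]: "cd (la A) = A" and la_iso[simp]: "isoC (la A)"
  using SMfacts5 by (simp_all add: hom_def)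

lemma rh_nat: "rh (cd f) \<cdot> T f (ID tt) = f \<cdot> rh (dm f)"
  and la_nat: "la (cd f) \<cdot> T (ID tt) f = f \<cdot> la (dm f)"
  using SMfacts6[rule_format, where f=f and A="dm f" and B="cd f"] by (simp_all add: hom_def)

lemma SAfacts1: "\<forall>f A B. f \<in> hom C A B \<longrightarrow> bar C f \<in> hom C (bob C B) (bob C A)"
  using SA unfolding star_autonomous_def by (elim conjE) assumption
lemma SAfacts2: "\<forall>A. bar C (cid C A) = cid C (bob C A)"
  using SA unfolding star_autonomous_def by (elim conjE) assumption
lemma SAfacts3: "\<forall>f g A B D. f \<in> hom C A B \<longrightarrow> g \<in> hom C B D \<longrightarrow>
        bar C (ccomp C g f) = ccomp C (bar C f) (bar C g)"
  using SA unfolding star_autonomous_def by (elim conjE) assumption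
lemma SAfacts4: "\<forall>A. ceps C A \<in> hom C (bob C (bob C A)) A \<and> isom C (ceps C A)"
  using SA unfolding star_autonomous_def by (elim conjE) assumption
lemma SAfacts5: "\<forall>f A B. f \<in> hom C A B \<longrightarrow>
        ccomp C f (ceps C A) = ccomp C (ceps C B) (bar C (bar C f))"
  using SA unfolding star_autonomous_def by (elim conjE) assumption

lemma bar_hom: "Bb f \<in> hom C (Bo (cd f)) (Bo (dm f))"
  using SAfacts1[rule_format, where f=f and A="dm f" and B="cd f"] by (simp add: hom_def)
lemma bar_dom[simp]: "dm (Bb f) = Bo (cd f)" using bar_hom by (simp add: hom_def)
lemma bar_cod[simp]: "cd (Bb f) = Bo (dm f)" using bar_hom by (simp add: hom_def)
lemma bar_id[simp]: "Bb (ID A) = ID (Bo A)" using SAfacts2 by blast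
lemma bar_comp: "cd f = dm g \<Longrightarrow> Bb (g \<cdot> f) = Bb f \<cdot> Bb g"
  using SAfacts3[rule_format, where f=f and g=g and A="dm f" and B="cd f" and D="cd g"] by (simp add: hom_def)
lemma ep_dom[simp]: "dm (ep A) = Bo (Bo A)" and ep_cod[simp]: "cd (ep A) = A" and ep_iso[simp]: "isoC (ep A)"
  using SAfacts4 by (simp_all add: hom_def)
lemma ep_nat: "f \<cdot> ep (dm f) = ep (cd f) \<cdot> Bb (Bb f)"
  using SAfacts5[rule_format, OF arr_hom] .

lemma B1facts1: "\<forall>A. cdelta C A \<in> hom C A (tob C A A) \<and> cpi C A \<in> hom C A (tunit C)"
  using B1 unfolding B1_def by (elim conjE) assumption
lemma B1facts2: "\<forall>A. ccomp C (clam C A) (ccomp C (tar C (cpi C A) (cid C A)) (cdelta C A)) = cid C A"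
  using B1 unfolding B1_def by (elim conjE) assumption
lemma B1facts3: "\<forall>A. ccomp C (crho C A) (ccomp C (tar C (cid C A) (cpi C A)) (cdelta C A)) = cid C A"
  using B1 unfolding B1_def by (elim conjE) assumption

lemma de_dom[simp]: "dm (cdelta C A) = A" and de_cod[simp]: "cd (cdelta C A) = tb A A"
  and pi_dom[simp]: "dm (cpi C A) = A" and pi_cod[simp]: "cd (cpi C A) = tt"
  using B1facts1 by (simp_all add: hom_def)
lemma counit_l: "la A \<cdot> T (cpi C A) (ID A) \<cdot> cdelta C A = ID A" using B1facts2 by blast
lemma counit_r: "rh A \<cdot> T (ID A) (cpi C A) \<cdot> cdelta C A = ID A" using B1facts3 by blast

lemma pi_t: "cpi C tt = ID tt" using B2 unfolding B2_def by blast

lemma B3facts1: "\<forall>A B D E. cmed C A B D E \<in>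
        hom C (vob C (tob C A B) (tob C D E)) (tob C (vob C A D) (vob C B E))"
  using B3 unfolding B3_def by (elim conjE) assumption
lemma B3facts2: "\<forall>f1 f2 f3 f4 A B D E A' B' D' E'.
        f1 \<in> hom C A A' \<longrightarrow> f2 \<in> hom C B B' \<longrightarrow> f3 \<in> hom C D D' \<longrightarrow> f4 \<in> hom C E E' \<longrightarrow>
        ccomp C (cmed C A' B' D' E') (var C (tar C f1 f2) (tar C f3 f4))
        = ccomp C (tar C (var C f1 f3) (var C f2 f4)) (cmed C A B D E)"
  using B3 unfolding B3_def by (elim conjE) assumption
lemma B3facts3: "medial_selfdual C"
  using B3 unfolding B3_def by (elim conjE) assumption
lemma B3facts4: "\<forall>A B. cdelta C (vob C A B) = ccomp C (cmed C A A B B) (var C (cdelta C A) (cdelta C B))"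
  using B3 unfolding B3_def by (elim conjE) assumption
lemma B3facts5: "cnm C \<in> hom C (vob C (tunit C) (tunit C)) (tunit C)"
  using B3 unfolding B3_def by (elim conjE) assumption
lemma B3facts6: "cpi C (vob C (tunit C) (tunit C)) = cnm C"
  using B3 unfolding B3_def by (elim conjE) assumption
lemma B3facts7: "cnm C = cnabla C (tunit C)"
  using B3 unfolding B3_def by (elim conjE) assumption

lemma med_dom[simp]: "dm (cmed C A B D E) = Bo (tb (Bo (tb D E)) (Bo (tb A B)))"
  and med_cod[simp]: "cd (cmed C A B D E) = tb (Bo (tb (Bo D) (Bo A))) (Bo (tb (Bo E) (Bo B)))"
  using B3facts1 by (simp_all add: hom_def vob_def)

lemma var_dom[simp]: "dm (V f g) = Bo (tb (Bo (dm g)) (Bo (dm f)))"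
  and var_cod[simp]: "cd (V f g) = Bo (tb (Bo (cd g)) (Bo (cd f)))"
  unfolding var_def by simp_all

lemma med_nat: "cmed C (cd f1) (cd f2) (cd f3) (cd f4) \<cdot> V (T f1 f2) (T f3 f4)
   = T (V f1 f3) (V f2 f4) \<cdot> cmed C (dm f1) (dm f2) (dm f3) (dm f4)"
  using B3facts2[rule_format, OF arr_hom arr_hom arr_hom arr_hom] .

lemma selfdual: "T (dmt C D E) (dmt C A B) \<cdot> ep (tb (Bo (tb D E)) (Bo (tb A B))) \<cdot> Bb (cmed C A B D E)
     = cmed C (Bo E) (Bo B) (Bo D) (Bo A) \<cdot> V (ep (tb (Bo E) (Bo B))) (ep (tb (Bo D) (Bo A)))
        \<cdot> dmt C (vob C A D) (vob C B E)"
  using B3facts3 unfolding medial_selfdual_def by blast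

lemma delta_vob: "cdelta C (vob C A B) = cmed C A A B B \<cdot> V (cdelta C A) (cdelta C B)"
  using B3facts4 by blast

lemma nm_dom[simp]: "dm (cnm C) = Bo (tb (Bo tt) (Bo tt))" and nm_cod[simp]: "cd (cnm C) = tt"
  using B3facts5 by (simp_all add: hom_def vob_def)
lemma pi_tt: "cpi C (Bo (tb (Bo tt) (Bo tt))) = cnm C" using B3facts6 unfolding vob_def by simp
lemma nm_def: "cnm C = ep tt \<cdot> Bb (cdelta C (Bo tt))" using B3facts7 unfolding cnabla_def by simp

lemma dmt_dom[simp]: "dm (dmt C P Q) = Bo (tb P Q)"
  and dmt_cod[simp]: "cd (dmt C P Q) = Bo (tb (Bo (Bo P)) (Bo (Bo Q)))"
  unfolding dmt_def by simp_all

lemma rh_nat': "dm f = A \<Longrightarrow> cd f = B \<Longrightarrow> rh B \<cdot> T f (ID tt) = f \<cdot> rh A"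
  using rh_nat by blast
lemma la_nat': "dm f = A \<Longrightarrow> cd f = B \<Longrightarrow> la B \<cdot> T (ID tt) f = f \<cdot> la A"
  using la_nat by blast
lemma ep_nat': "dm f = A \<Longrightarrow> cd f = B \<Longrightarrow> f \<cdot> ep A = ep B \<cdot> Bb (Bb f)"
  using ep_nat by blast
lemma med_nat': "dm f1 = A \<Longrightarrow> dm f2 = B \<Longrightarrow> dm f3 = D \<Longrightarrow> dm f4 = E \<Longrightarrow>
  cd f1 = A' \<Longrightarrow> cd f2 = B' \<Longrightarrow> cd f3 = D' \<Longrightarrow> cd f4 = E' \<Longrightarrow>
  cmed C A' B' D' E' \<cdot> V (T f1 f2) (T f3 f4) = T (V f1 f3) (V f2 f4) \<cdot> cmed C A B D E"
  using med_nat by blast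

lemma inv_unique: assumes "cd f = dm g" "cd g = dm f" "g \<cdot> f = ID (dm f)" "f \<cdot> g = ID (cd f)"
  shows "iv f = g"
proof -
  have ig: "is_inverse C f g" using assms unfolding is_inverse_def hom_def by auto
  have "\<And>h. is_inverse C f h \<Longrightarrow> h = g"
  proof -
    fix h assume h: "is_inverse C f h"
    then have h1: "dm h = cd f" "cd h = dm f" "h \<cdot> f = ID (dm f)" "f \<cdot> h = ID (cd f)"
      unfolding is_inverse_def hom_def by auto
    have "h = h \<cdot> (f \<cdot> g)" using assms h1 by simp
    also have "\<dots> = (h \<cdot> f) \<cdot> g" by (rule assoc[symmetric]) (use assms(1,2) h1(1,2) in simp_all)
    also have "\<dots> = g" using assms h1 by simp
    finally show "h = g" .
  qed
  then show ?thesis unfolding invm_def using ig by (rule the_equality[rotated])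
qed

lemma inv_props: assumes "isoC f"
  shows "dm (iv f) = cd f \<and> cd (iv f) = dm f \<and> iv f \<cdot> f = ID (dm f) \<and> f \<cdot> iv f = ID (cd f)"
proof -
  obtain g where g: "is_inverse C f g" using assms unfolding isom_def by blast
  then have g1: "dm g = cd f" "cd g = dm f" "g \<cdot> f = ID (dm f)" "f \<cdot> g = ID (cd f)"
    unfolding is_inverse_def hom_def by auto
  have "iv f = g" using g1 by (intro inv_unique) auto
  then show ?thesis using g1 by simp
qed

lemma inv_dom[simp]: "isoC f \<Longrightarrow> dm (iv f) = cd f" using inv_props by blast
lemma inv_cod[simp]: "isoC f \<Longrightarrow> cd (iv f) = dm f" using inv_props by blast
lemma inv_l[simp]: "isoC f \<Longrightarrow> iv f \<cdot> f = ID (dm f)" using inv_props by blast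
lemma inv_r[simp]: "isoC f \<Longrightarrow> f \<cdot> iv f = ID (cd f)" using inv_props by blast
lemma inv_l2[simp]: "isoC f \<Longrightarrow> cd h = dm f \<Longrightarrow> iv f \<cdot> (f \<cdot> h) = h"
proof -
  assume a: "isoC f" "cd h = dm f"
  have "iv f \<cdot> (f \<cdot> h) = (iv f \<cdot> f) \<cdot> h" by (rule assoc[symmetric]) (use a in simp_all)
  then show ?thesis using a by simp
qed
lemma inv_r2[simp]: "isoC f \<Longrightarrow> cd h = cd f \<Longrightarrow> f \<cdot> (iv f \<cdot> h) = h"
proof -
  assume a: "isoC f" "cd h = cd f"
  have "f \<cdot> (iv f \<cdot> h) = (f \<cdot> iv f) \<cdot> h" by (rule assoc[symmetric]) (use a in simp_all)
  then show ?thesis using a by simp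
qed

lemma iso_intro: "cd f = dm g \<Longrightarrow> cd g = dm f \<Longrightarrow> g \<cdot> f = ID (dm f) \<Longrightarrow> f \<cdot> g = ID (cd f) \<Longrightarrow> isoC f"
  unfolding isom_def is_inverse_def hom_def by auto

lemma right_inv: assumes "isoC r" "cd y = dm r" "dm y = cd r" "r \<cdot> y = ID (cd r)" shows "y = iv r"
proof -
  have "y = iv r \<cdot> (r \<cdot> y)" using assms(1,2) by simp
  also have "\<dots> = iv r" using assms by simp
  finally show ?thesis .
qed

lemma iso_id[simp]: "isoC (ID A)"
  by (rule iso_intro[where g="ID A"]) simp_all

lemma inv_id[simp]: "iv (ID A) = ID A"
  by (rule inv_unique) simp_all

lemma iso_comp[simp]: "isoC f \<Longrightarrow> isoC g \<Longrightarrow> cd f = dm g \<Longrightarrow> isoC (g \<cdot> f)"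
  by (rule iso_intro[where g="iv f \<cdot> iv g"]) simp_all

lemma iso_inv[simp]: "isoC f \<Longrightarrow> isoC (iv f)"
  by (rule iso_intro[where g="f"]) simp_all

lemma inv_inv[simp]: "isoC f \<Longrightarrow> iv (iv f) = f"
  by (rule inv_unique) simp_all

lemma inv_comp: "isoC f \<Longrightarrow> isoC g \<Longrightarrow> cd f = dm g \<Longrightarrow> iv (g \<cdot> f) = iv f \<cdot> iv g"
  by (rule inv_unique) simp_all

lemma iso_tar[simp]: "isoC f \<Longrightarrow> isoC g \<Longrightarrow> isoC (T f g)"
  by (rule iso_intro[where g="T (iv f) (iv g)"]) (simp_all flip: tar_comp)

lemma inv_tar: "isoC f \<Longrightarrow> isoC g \<Longrightarrow> iv (T f g) = T (iv f) (iv g)"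
  by (rule inv_unique) (simp_all flip: tar_comp)

lemma iso_bar[simp]: "isoC f \<Longrightarrow> isoC (Bb f)"
  by (rule iso_intro[where g="Bb (iv f)"]) (simp_all flip: bar_comp)

lemma inv_bar: "isoC f \<Longrightarrow> iv (Bb f) = Bb (iv f)"
  by (rule inv_unique) (simp_all flip: bar_comp)

lemma iso_cancel_l: assumes "isoC h" "cd x = dm h" "cd y = dm h" "h \<cdot> x = h \<cdot> y" shows "x = y"
proof -
  have "x = iv h \<cdot> (h \<cdot> x)" using assms(1,2) by simp
  also have "\<dots> = iv h \<cdot> (h \<cdot> y)" using assms(4) by simp
  also have "\<dots> = y" using assms(1,3) by simp
  finally show ?thesis .
qed
lemma iso_cancel_r: assumes "isoC h" "dm x = cd h" "dm y = cd h" "x \<cdot> h = y \<cdot> h" shows "x = y"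
proof -
  have "x = (x \<cdot> h) \<cdot> iv h" using assms(1,2) by simp
  also have "\<dots> = (y \<cdot> h) \<cdot> iv h" using assms(4) by simp
  also have "\<dots> = y" using assms(1,3) by simp
  finally show ?thesis .
qed

lemma bar_inj: assumes "dm x = dm y" "cd x = cd y" "Bb x = Bb y" shows "x = y"
proof -
  have e: "x \<cdot> ep (dm x) = y \<cdot> ep (dm x)" using ep_nat[of x] ep_nat[of y] assms by simp
  show ?thesis by (rule iso_cancel_r[OF ep_iso[of "dm x"] _ _ e]) (use assms in simp_all)
qed

lemma var_id[simp]: "V (ID A) (ID B) = ID (Bo (tb (Bo B) (Bo A)))"
  unfolding var_def by simp

lemma var_comp: "cd f = dm f' \<Longrightarrow> cd g = dm g' \<Longrightarrow> V (f' \<cdot> f) (g' \<cdot> g) = V f' g' \<cdot> V f g"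
  unfolding var_def by (simp add: bar_comp tar_comp)

end


context b3 begin

abbreviation "ff \<equiv> Bo tt"
abbreviation "PP \<equiv> cpi C ff"
abbreviation "DD \<equiv> cdelta C ff"
abbreviation "nm \<equiv> cnm C"
abbreviation "lV A \<equiv> lamV C A"
abbreviation "rV A \<equiv> rhoV C A"

lemma rest2: "x \<cdot> y = z \<Longrightarrow> cd y = dm x \<Longrightarrow> cd r = dm y \<Longrightarrow> x \<cdot> (y \<cdot> r) = z \<cdot> r"
proof -
  assume a: "x \<cdot> y = z" "cd y = dm x" "cd r = dm y"
  have "x \<cdot> (y \<cdot> r) = (x \<cdot> y) \<cdot> r" by (rule assoc[symmetric]) (use a in simp_all)
  then show ?thesis using a(1) by simp
qed

lemma rest3: "x \<cdot> (y \<cdot> w) = z \<Longrightarrow> cd y = dm x \<Longrightarrow> cd w = dm y \<Longrightarrow> cd r = dm w \<Longrightarrow>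
   x \<cdot> (y \<cdot> (w \<cdot> r)) = z \<cdot> r"
proof -
  assume a: "x \<cdot> (y \<cdot> w) = z" "cd y = dm x" "cd w = dm y" "cd r = dm w"
  have "y \<cdot> (w \<cdot> r) = (y \<cdot> w) \<cdot> r" by (rule assoc[symmetric]) (use a in simp_all)
  then have "x \<cdot> (y \<cdot> (w \<cdot> r)) = x \<cdot> ((y \<cdot> w) \<cdot> r)" by simp
  also have "\<dots> = (x \<cdot> (y \<cdot> w)) \<cdot> r" by (rule assoc[symmetric]) (use a in simp_all)
  finally show ?thesis using a(1) by simp
qed

lemma lV_dom[simp]: "dm (lV A) = Bo (tb (Bo A) (Bo (Bo tt)))" unfolding lamV_def by simp
lemma lV_cod[simp]: "cd (lV A) = A" unfolding lamV_def by simp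
lemma lV_iso[simp]: "isoC (lV A)" unfolding lamV_def by simp
lemma rV_dom[simp]: "dm (rV A) = Bo (tb (Bo (Bo tt)) (Bo A))" unfolding rhoV_def by simp
lemma rV_cod[simp]: "cd (rV A) = A" unfolding rhoV_def by simp
lemma rV_iso[simp]: "isoC (rV A)" unfolding rhoV_def by simp

lemma iso_move:
  assumes a: "isoC a" and b: "isoC b" and t1: "cd a = dm x" and t2: "cd y = dm b"
    and t3: "cd x = cd b" and t4: "dm y = dm a" and e: "x \<cdot> a = b \<cdot> y"
  shows "iv b \<cdot> x = y \<cdot> iv a"
proof -
  have "(b \<cdot> (iv b \<cdot> x)) \<cdot> a = (b \<cdot> (y \<cdot> iv a)) \<cdot> a"
    using a b t1 t2 t3 t4 e by simp
  then have "b \<cdot> (iv b \<cdot> x) = b \<cdot> (y \<cdot> iv a)"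
    by (rule iso_cancel_r[OF a, rotated 2]) (use a b t1 t2 t3 t4 in simp_all)
  then show ?thesis
    by (rule iso_cancel_l[OF b, rotated 2]) (use a b t1 t2 t3 t4 in simp_all)
qed

lemma lV_nat: assumes g: "dm g = A" "cd g = A'" shows "lV A' \<cdot> V (ID ff) g = g \<cdot> lV A"
proof -
  define R where "R X = rh (Bo X) \<cdot> T (ID (Bo X)) (ep tt)" for X
  have Rt[simp]: "dm (R X) = tb (Bo X) (Bo ff)" "cd (R X) = Bo X" "isoC (R X)" for X
    unfolding R_def by simp_all
  have 0: "T (ID (Bo A)) (ep tt) \<cdot> T (Bb g) (ID (Bo ff)) = T (Bb g) (ID tt) \<cdot> T (ID (Bo A')) (ep tt)"
    using g by (simp flip: tar_comp)
  have n: "rh (Bo A) \<cdot> T (Bb g) (ID tt) = Bb g \<cdot> rh (Bo A')" using g by (intro rh_nat') simp_all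
  have 1: "R A \<cdot> T (Bb g) (ID (Bo ff)) = Bb g \<cdot> R A'"
    unfolding R_def using g by (simp add: 0 rest2[OF n])
  have 2: "Bb (T (Bb g) (ID (Bo ff))) \<cdot> Bb (R A) = Bb (R A') \<cdot> Bb (Bb g)"
  proof -
    have "Bb (R A \<cdot> T (Bb g) (ID (Bo ff))) = Bb (Bb g \<cdot> R A')" using 1 by simp
    then show ?thesis using g by (simp add: bar_comp)
  qed
  have v: "V (ID ff) g = Bb (T (Bb g) (ID (Bo ff)))" unfolding var_def by simp
  have 3: "iv (Bb (R A')) \<cdot> V (ID ff) g = Bb (Bb g) \<cdot> iv (Bb (R A))"
    unfolding v by (rule iso_move) (use g 2 in simp_all)
  have e: "ep A' \<cdot> Bb (Bb g) = g \<cdot> ep A" using ep_nat'[OF g] by simp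
  have "lV A' = ep A' \<cdot> iv (Bb (R A'))" unfolding lamV_def R_def ..
  moreover have "lV A = ep A \<cdot> iv (Bb (R A))" unfolding lamV_def R_def ..
  ultimately show ?thesis using g by (simp add: 3 rest2[OF e])
qed

definition "aa = ep tt \<cdot> (Bb (iv (ep tt) \<cdot> PP) \<cdot> iv (ep ff))"

lemma aa_dom[simp]: "dm aa = ff" and aa_cod[simp]: "cd aa = tt"
  unfolding aa_def by simp_all

lemma Baa: "Bb aa = iv (ep tt) \<cdot> PP"
proof (rule bar_inj)
  show "dm (Bb aa) = dm (iv (ep tt) \<cdot> PP)" by simp
  show "cd (Bb aa) = cd (iv (ep tt) \<cdot> PP)" by simp
  have e: "aa \<cdot> ep ff = ep tt \<cdot> Bb (Bb aa)" by (rule ep_nat') simp_all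
  have "Bb (Bb aa) = iv (ep tt) \<cdot> (aa \<cdot> ep ff)" by (simp add: e)
  also have "\<dots> = Bb (iv (ep tt) \<cdot> PP)" unfolding aa_def by simp
  finally show "Bb (Bb aa) = Bb (iv (ep tt) \<cdot> PP)" .
qed

lemma N2: "lV tt = nm \<cdot> V aa (ID tt)"
proof -
  define R where "R = rh ff \<cdot> T (ID ff) (ep tt)"
  define Y where "Y = T (ID ff) (Bb aa) \<cdot> DD"
  have Rt[simp]: "dm R = tb ff (Bo ff)" "cd R = ff" "isoC R" unfolding R_def by simp_all
  have Yt[simp]: "dm Y = ff" "cd Y = tb ff (Bo ff)" unfolding Y_def by simp_all
  have 0: "T (ID ff) (ep tt) \<cdot> T (ID ff) (Bb aa) = T (ID ff) PP"
    by (simp add: Baa flip: tar_comp)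
  have RY: "R \<cdot> Y = ID (cd R)"
    unfolding R_def Y_def using counit_r[of ff] by (simp add: rest2[OF 0])
  have YR: "Y = iv R" by (rule right_inv) (simp_all add: RY)
  have "lV tt = ep tt \<cdot> iv (Bb R)" unfolding lamV_def R_def ..
  also have "\<dots> = ep tt \<cdot> Bb Y" by (simp add: YR inv_bar)
  also have "\<dots> = ep tt \<cdot> (Bb DD \<cdot> Bb (T (ID ff) (Bb aa)))" unfolding Y_def by (simp add: bar_comp)
  also have "\<dots> = nm \<cdot> V aa (ID tt)" unfolding nm_def var_def by simp
  finally show ?thesis .
qed

lemma N3: "rV tt = nm \<cdot> V (ID tt) aa"
proof -
  define L where "L = la ff \<cdot> T (ep tt) (ID ff)"
  define Y where "Y = T (Bb aa) (ID ff) \<cdot> DD"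
  have Lt[simp]: "dm L = tb (Bo ff) ff" "cd L = ff" "isoC L" unfolding L_def by simp_all
  have Yt[simp]: "dm Y = ff" "cd Y = tb (Bo ff) ff" unfolding Y_def by simp_all
  have 0: "T (ep tt) (ID ff) \<cdot> T (Bb aa) (ID ff) = T PP (ID ff)"
    by (simp add: Baa flip: tar_comp)
  have LY: "L \<cdot> Y = ID (cd L)"
    unfolding L_def Y_def using counit_l[of ff] by (simp add: rest2[OF 0])
  have YL: "Y = iv L" by (rule right_inv) (simp_all add: LY)
  have "rV tt = ep tt \<cdot> iv (Bb L)" unfolding rhoV_def L_def ..
  also have "\<dots> = ep tt \<cdot> Bb Y" by (simp add: YL inv_bar)
  also have "\<dots> = ep tt \<cdot> (Bb DD \<cdot> Bb (T (Bb aa) (ID ff)))" unfolding Y_def by (simp add: bar_comp)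
  also have "\<dots> = nm \<cdot> V (ID tt) aa" unfolding nm_def var_def by simp
  finally show ?thesis .
qed

lemma Dt_r: "cdelta C tt = iv (rh tt)"
  by (rule right_inv) (use counit_r[of tt] in \<open>simp_all add: pi_t\<close>)
lemma Dt_l: "cdelta C tt = iv (la tt)"
  by (rule right_inv) (use counit_l[of tt] in \<open>simp_all add: pi_t\<close>)
lemma RL: "rh tt = la tt"
proof -
  have "iv (iv (rh tt)) = iv (iv (la tt))" using Dt_r Dt_l by simp
  then show ?thesis by simp
qed

abbreviation "XX \<equiv> Bo (tb ff ff)"

lemma s4: "cmed C tt tt tt tt \<cdot> V (iv (rh tt)) (iv (la tt)) = cdelta C XX"
  using delta_vob[of tt tt] unfolding vob_def by (simp flip: Dt_r Dt_l)

lemma s5: "rh tt \<cdot> T nm nm = nm \<cdot> (rh XX \<cdot> T (ID XX) nm)"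
proof -
  have 1: "T nm nm = T nm (ID tt) \<cdot> T (ID XX) nm" by (simp flip: tar_comp)
  have 2: "rh tt \<cdot> T nm (ID tt) = nm \<cdot> rh XX" by (rule rh_nat') simp_all
  show ?thesis by (simp add: 1 rest2[OF 2])
qed

lemma s6: "rh XX \<cdot> (T (ID XX) nm \<cdot> cdelta C XX) = ID XX"
  using counit_r[of XX] pi_tt by simp

lemma s7: "nm \<cdot> V aa aa = lV tt \<cdot> V (ID ff) aa"
proof -
  have 1: "V aa aa = V aa (ID tt) \<cdot> V (ID ff) aa" by (simp flip: var_comp)
  have 2: "nm \<cdot> V aa (ID tt) = lV tt" by (simp add: N2)
  show ?thesis by (simp add: 1 rest2[OF 2])
qed

lemma s8: "lV tt \<cdot> V (ID ff) aa = aa \<cdot> lV ff" by (rule lV_nat) simp_all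

lemma tail: "nm \<cdot> (V aa aa \<cdot> iv (lV ff)) = aa"
  by (simp add: rest2[OF s7] rest2[OF s8])

lemma rh_aa: "T aa (ID tt) \<cdot> iv (rh ff) = iv (rh tt) \<cdot> aa"
proof -
  have "aa \<cdot> rh ff = rh tt \<cdot> T aa (ID tt)" by (rule rh_nat'[symmetric]) simp_all
  then have "iv (rh tt) \<cdot> aa = T aa (ID tt) \<cdot> iv (rh ff)" by (rule iso_move[rotated 6]) simp_all
  then show ?thesis by simp
qed

lemma la_aa: "T (ID tt) aa \<cdot> iv (la ff) = iv (la tt) \<cdot> aa"
proof -
  have "aa \<cdot> la ff = la tt \<cdot> T (ID tt) aa" by (rule la_nat'[symmetric]) simp_all
  then have "iv (la tt) \<cdot> aa = T (ID tt) aa \<cdot> iv (la ff)" by (rule iso_move[rotated 6]) simp_all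
  then show ?thesis by simp
qed

lemma E1: "e1 C = aa"
proof -
  have s1: "T (lV tt) (rV tt) = T nm nm \<cdot> T (V aa (ID tt)) (V (ID tt) aa)"
    by (simp add: N2 N3 tar_comp)
  have s2: "T (V aa (ID tt)) (V (ID tt) aa) \<cdot> cmed C ff tt tt ff
       = cmed C tt tt tt tt \<cdot> V (T aa (ID tt)) (T (ID tt) aa)"
    by (rule med_nat'[symmetric]) simp_all
  have s3: "V (T aa (ID tt)) (T (ID tt) aa) \<cdot> V (iv (rh ff)) (iv (la ff))
      = V (iv (rh tt)) (iv (la tt)) \<cdot> V aa aa"
    by (simp add: rh_aa la_aa flip: var_comp)
  have "e1 C = rh tt \<cdot> (T (lV tt) (rV tt) \<cdot> (cmed C ff tt tt ff \<cdot> (V (iv (rh ff)) (iv (la ff)) \<cdot> iv (lV ff))))"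
    unfolding e1_def fob_def ..
  also have "\<dots> = rh tt \<cdot> (T nm nm \<cdot> (cmed C tt tt tt tt \<cdot> (V (iv (rh tt)) (iv (la tt)) \<cdot> (V aa aa \<cdot> iv (lV ff)))))"
    by (simp add: s1 rest2[OF s2] rest2[OF s3])
  also have "\<dots> = rh tt \<cdot> (T nm nm \<cdot> (cdelta C XX \<cdot> (V aa aa \<cdot> iv (lV ff))))"
    by (simp add: rest2[OF s4])
  also have "\<dots> = nm \<cdot> (V aa aa \<cdot> iv (lV ff))"
    by (simp add: rest2[OF s5] rest3[OF s6])
  also have "\<dots> = aa" by (rule tail)
  finally show ?thesis .
qed

lemma E2: "e2 C = aa"
proof -
  have s1: "T (rV tt) (lV tt) = T nm nm \<cdot> T (V (ID tt) aa) (V aa (ID tt))"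
    by (simp add: N2 N3 tar_comp)
  have s2: "T (V (ID tt) aa) (V aa (ID tt)) \<cdot> cmed C tt ff ff tt
       = cmed C tt tt tt tt \<cdot> V (T (ID tt) aa) (T aa (ID tt))"
    by (rule med_nat'[symmetric]) simp_all
  have s3: "V (T (ID tt) aa) (T aa (ID tt)) \<cdot> V (iv (la ff)) (iv (rh ff))
      = V (iv (rh tt)) (iv (la tt)) \<cdot> V aa aa"
    by (simp add: rh_aa la_aa RL flip: var_comp)
  have "e2 C = rh tt \<cdot> (T (rV tt) (lV tt) \<cdot> (cmed C tt ff ff tt \<cdot> (V (iv (la ff)) (iv (rh ff)) \<cdot> iv (lV ff))))"
    unfolding e2_def fob_def ..
  also have "\<dots> = rh tt \<cdot> (T nm nm \<cdot> (cmed C tt tt tt tt \<cdot> (V (iv (rh tt)) (iv (la tt)) \<cdot> (V aa aa \<cdot> iv (lV ff)))))"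
    by (simp add: s1 rest2[OF s2] rest2[OF s3])
  also have "\<dots> = rh tt \<cdot> (T nm nm \<cdot> (cdelta C XX \<cdot> (V aa aa \<cdot> iv (lV ff))))"
    by (simp add: rest2[OF s4])
  also have "\<dots> = nm \<cdot> (V aa aa \<cdot> iv (lV ff))"
    by (simp add: rest2[OF s5] rest3[OF s6])
  also have "\<dots> = aa" by (rule tail)
  finally show ?thesis .
qed

end


context b3 begin

definition "uu = ep ff \<cdot> Bb (ep tt)"
definition "vv = ep tt \<cdot> (Bb uu \<cdot> iv (ep tt))"

lemma uu_dom[simp]: "dm uu = ff" and uu_cod[simp]: "cd uu = ff" and uu_iso[simp]: "isoC uu"
  unfolding uu_def by simp_all
lemma vv_dom[simp]: "dm vv = tt" and vv_cod[simp]: "cd vv = tt" and vv_iso[simp]: "isoC vv"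
  unfolding vv_def by simp_all

lemma L2: assumes "dm g = A" "cd g = B"
  shows "ep (Bo A) \<cdot> (Bb (ep A) \<cdot> Bb g) = Bb g \<cdot> (ep (Bo B) \<cdot> Bb (ep B))"
proof -
  have 1: "Bb (ep A) \<cdot> Bb g = Bb (Bb (Bb g)) \<cdot> Bb (ep B)"
  proof -
    have "g \<cdot> ep A = ep B \<cdot> Bb (Bb g)" by (rule ep_nat') (use assms in simp_all)
    then have "Bb (g \<cdot> ep A) = Bb (ep B \<cdot> Bb (Bb g))" by simp
    then show ?thesis using assms by (simp add: bar_comp)
  qed
  have 2: "ep (Bo A) \<cdot> Bb (Bb (Bb g)) = Bb g \<cdot> ep (Bo B)"
    by (rule ep_nat'[symmetric]) (use assms in simp_all)
  show ?thesis using assms by (simp add: 1 rest2[OF 2])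
qed

lemma BBep: "Bb (Bb (ep A)) = ep (Bo (Bo A))"
proof -
  have e: "ep A \<cdot> ep (Bo (Bo A)) = ep A \<cdot> Bb (Bb (ep A))" by (rule ep_nat') simp_all
  have "ep (Bo (Bo A)) = Bb (Bb (ep A))" by (rule iso_cancel_l[OF ep_iso _ _ e]) simp_all
  then show ?thesis by simp
qed

lemma Bu: "Bb uu = ep (Bo ff) \<cdot> Bb (ep ff)"
  unfolding uu_def by (simp add: bar_comp BBep)

lemma Bv: "Bb vv = uu"
proof (rule bar_inj)
  show "dm (Bb vv) = dm uu" "cd (Bb vv) = cd uu" by simp_all
  have e: "vv \<cdot> ep tt = ep tt \<cdot> Bb (Bb vv)" by (rule ep_nat') simp_all
  have "Bb (Bb vv) = iv (ep tt) \<cdot> (vv \<cdot> ep tt)" by (simp add: e)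
  also have "\<dots> = Bb uu" unfolding vv_def by simp
  finally show "Bb (Bb vv) = Bb uu" .
qed

lemma U3: "ep tt \<cdot> Bb uu = vv \<cdot> ep tt" unfolding vv_def by simp

lemma U2: assumes "dm h = ff" "cd h = tt" shows "vv \<cdot> h = h \<cdot> uu"
proof (rule bar_inj)
  show "dm (vv \<cdot> h) = dm (h \<cdot> uu)" "cd (vv \<cdot> h) = cd (h \<cdot> uu)" using assms by simp_all
  have "Bb (vv \<cdot> h) = Bb h \<cdot> uu" using assms by (simp add: bar_comp Bv)
  also have "\<dots> = Bb uu \<cdot> Bb h"
  proof -
    have l: "ep (Bo ff) \<cdot> (Bb (ep ff) \<cdot> Bb h) = Bb h \<cdot> uu" using L2[OF assms] unfolding uu_def .
    show ?thesis using assms by (simp add: Bu l)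
  qed
  also have "\<dots> = Bb (h \<cdot> uu)" using assms by (simp add: bar_comp)
  finally show "Bb (vv \<cdot> h) = Bb (h \<cdot> uu)" .
qed

lemma U4: "rh tt \<cdot> T vv vv = vv \<cdot> (vv \<cdot> rh tt)"
proof -
  have 1: "T vv vv = T vv (ID tt) \<cdot> T (ID tt) vv" by (simp flip: tar_comp)
  have 2: "rh tt \<cdot> T vv (ID tt) = vv \<cdot> rh tt" by (rule rh_nat') simp_all
  have 3: "rh tt \<cdot> T (ID tt) vv = vv \<cdot> rh tt" unfolding RL by (rule la_nat') simp_all
  show ?thesis by (simp add: 1 rest2[OF 2] 3)
qed

abbreviation "R' \<equiv> rh (Bo ff) \<cdot> T (ID (Bo ff)) (ep tt)"
abbreviation "Y0 \<equiv> tb (Bo ff) (Bo ff)"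
abbreviation "X1 \<equiv> tb (Bo (tb tt ff)) (Bo (tb ff tt))"

lemma lVff: "lV ff = ep ff \<cdot> iv (Bb R')" unfolding lamV_def ..

lemma Lm1': "rh tt \<cdot> T (ep tt) (ep tt) = ep tt \<cdot> R'"
proof -
  have 1: "T (ep tt) (ep tt) = T (ep tt) (ID tt) \<cdot> T (ID (Bo ff)) (ep tt)" by (simp flip: tar_comp)
  have 2: "rh tt \<cdot> T (ep tt) (ID tt) = ep tt \<cdot> rh (Bo ff)" by (rule rh_nat') simp_all
  show ?thesis by (simp add: 1 rest2[OF 2])
qed

lemma Lm1: "vv \<cdot> (ep tt \<cdot> Bb (iv (lV ff))) = rh tt \<cdot> (T (ep tt) (ep tt) \<cdot> ep Y0)"
proof -
  have n: "ep (Bo ff) \<cdot> Bb (Bb R') = R' \<cdot> ep Y0" by (rule ep_nat'[symmetric]) simp_all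
  have m: "iv R' \<cdot> ep (Bo ff) = ep Y0 \<cdot> iv (Bb (Bb R'))" by (rule iso_move[OF _ _ _ _ _ _ n]) simp_all
  have bl: "Bb (lV ff) = iv (Bb (Bb R')) \<cdot> Bb (ep ff)"
  proof -
    have 1: "Bb (ep ff \<cdot> iv (Bb R')) = Bb (iv (Bb R')) \<cdot> Bb (ep ff)" by (rule bar_comp) simp
    have 2: "Bb (iv (Bb R')) = iv (Bb (Bb R'))" by (rule inv_bar[symmetric]) simp
    show ?thesis unfolding lVff 1 2 ..
  qed
  have 1: "rh tt \<cdot> (T (ep tt) (ep tt) \<cdot> (ep Y0 \<cdot> Bb (lV ff))) = vv \<cdot> ep tt"
  proof -
    have "rh tt \<cdot> (T (ep tt) (ep tt) \<cdot> (ep Y0 \<cdot> Bb (lV ff)))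
        = ep tt \<cdot> (R' \<cdot> (iv R' \<cdot> (ep (Bo ff) \<cdot> Bb (ep ff))))"
      by (simp add: bl rest2[OF Lm1'] rest2[OF m[symmetric]])
    also have "\<dots> = ep tt \<cdot> Bb uu" by (simp add: Bu)
    also have "\<dots> = vv \<cdot> ep tt" by (rule U3)
    finally show ?thesis .
  qed
  have 2: "Bb (lV ff) \<cdot> Bb (iv (lV ff)) = ID (Bo (Bo (tb (Bo ff) (Bo ff))))"
    by (simp flip: bar_comp)
  have "vv \<cdot> (ep tt \<cdot> Bb (iv (lV ff))) = rh tt \<cdot> (T (ep tt) (ep tt) \<cdot> (ep Y0 \<cdot> (Bb (lV ff) \<cdot> Bb (iv (lV ff)))))"
    by (simp add: rest2[OF 1[symmetric]])
  also have "\<dots> = rh tt \<cdot> (T (ep tt) (ep tt) \<cdot> ep Y0)" by (simp add: 2)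
  finally show ?thesis .
qed

lemma Lm2: "ep Y0 \<cdot> Bb (V (iv (rh ff)) (iv (la ff))) = T (Bb (iv (la ff))) (Bb (iv (rh ff))) \<cdot> ep X1"
  unfolding var_def by (rule ep_nat'[symmetric]) simp_all

lemma Lm3: "rV tt \<cdot> (V (ep tt) (ID ff) \<cdot> dmt C tt ff) = vv \<cdot> (ep tt \<cdot> Bb (iv (la ff)))"
proof -
  define L where "L = la ff \<cdot> T (ep tt) (ID ff)"
  have Lt[simp]: "dm L = tb (Bo ff) ff" "cd L = ff" "isoC L" unfolding L_def by simp_all
  have a: "V (ep tt) (ID ff) \<cdot> dmt C tt ff = Bb (T (ep tt) uu)"
  proof -
    have "V (ep tt) (ID ff) \<cdot> dmt C tt ff = Bb (T (ep tt) (ep ff) \<cdot> T (ID (Bo ff)) (Bb (ep tt)))"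
      unfolding var_def dmt_def by (simp add: bar_comp)
    also have "\<dots> = Bb (T (ep tt) uu)" unfolding uu_def by (simp flip: tar_comp)
    finally show ?thesis .
  qed
  have iL: "iv L = T (iv (ep tt)) (ID ff) \<cdot> iv (la ff)"
    unfolding L_def by (simp add: inv_comp inv_tar)
  have ln: "la ff \<cdot> T (ID tt) uu = uu \<cdot> la ff" by (rule la_nat') simp_all
  have lm: "iv (la ff) \<cdot> uu = T (ID tt) uu \<cdot> iv (la ff)"
    by (rule iso_move[OF _ _ _ _ _ _ ln[symmetric]]) simp_all
  have c: "T (ep tt) uu \<cdot> iv L = iv (la ff) \<cdot> uu"
  proof -
    have 0: "T (ep tt) uu \<cdot> T (iv (ep tt)) (ID ff) = T (ID tt) uu" by (simp flip: tar_comp)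
    show ?thesis by (simp add: iL rest2[OF 0] lm)
  qed
  have "rV tt \<cdot> (V (ep tt) (ID ff) \<cdot> dmt C tt ff) = ep tt \<cdot> (Bb (iv L) \<cdot> Bb (T (ep tt) uu))"
    unfolding a rhoV_def L_def by (simp add: inv_bar)
  also have "\<dots> = ep tt \<cdot> Bb (iv (la ff) \<cdot> uu)"
    by (simp flip: c bar_comp)
  also have "\<dots> = ep tt \<cdot> (Bb uu \<cdot> Bb (iv (la ff)))" by (simp add: bar_comp)
  also have "\<dots> = vv \<cdot> (ep tt \<cdot> Bb (iv (la ff)))" by (simp add: rest2[OF U3])
  finally show ?thesis .
qed

lemma Lm4: "lV tt \<cdot> (V (ID ff) (ep tt) \<cdot> dmt C ff tt) = vv \<cdot> (ep tt \<cdot> Bb (iv (rh ff)))"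
proof -
  define L where "L = rh ff \<cdot> T (ID ff) (ep tt)"
  have Lt[simp]: "dm L = tb ff (Bo ff)" "cd L = ff" "isoC L" unfolding L_def by simp_all
  have a: "V (ID ff) (ep tt) \<cdot> dmt C ff tt = Bb (T uu (ep tt))"
  proof -
    have "V (ID ff) (ep tt) \<cdot> dmt C ff tt = Bb (T (ep ff) (ep tt) \<cdot> T (Bb (ep tt)) (ID (Bo ff)))"
      unfolding var_def dmt_def by (simp add: bar_comp)
    also have "\<dots> = Bb (T uu (ep tt))" unfolding uu_def by (simp flip: tar_comp)
    finally show ?thesis .
  qed
  have iL: "iv L = T (ID ff) (iv (ep tt)) \<cdot> iv (rh ff)"
    unfolding L_def by (simp add: inv_comp inv_tar)
  have ln: "rh ff \<cdot> T uu (ID tt) = uu \<cdot> rh ff" by (rule rh_nat') simp_all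
  have lm: "iv (rh ff) \<cdot> uu = T uu (ID tt) \<cdot> iv (rh ff)"
    by (rule iso_move[OF _ _ _ _ _ _ ln[symmetric]]) simp_all
  have c: "T uu (ep tt) \<cdot> iv L = iv (rh ff) \<cdot> uu"
  proof -
    have 0: "T uu (ep tt) \<cdot> T (ID ff) (iv (ep tt)) = T uu (ID tt)" by (simp flip: tar_comp)
    show ?thesis by (simp add: iL rest2[OF 0] lm)
  qed
  have "lV tt \<cdot> (V (ID ff) (ep tt) \<cdot> dmt C ff tt) = ep tt \<cdot> (Bb (iv L) \<cdot> Bb (T uu (ep tt)))"
    unfolding a lamV_def L_def by (simp add: inv_bar)
  also have "\<dots> = ep tt \<cdot> Bb (iv (rh ff) \<cdot> uu)"
    by (simp flip: c bar_comp)
  also have "\<dots> = ep tt \<cdot> (Bb uu \<cdot> Bb (iv (rh ff)))" by (simp add: bar_comp)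
  also have "\<dots> = vv \<cdot> (ep tt \<cdot> Bb (iv (rh ff)))" by (simp add: rest2[OF U3])
  finally show ?thesis .
qed

abbreviation "p4 \<equiv> V (iv (rh ff)) (iv (la ff))"
abbreviation "V1 \<equiv> V (ep tt) (ID ff)"
abbreviation "V2 \<equiv> V (ID ff) (ep tt)"

lemma Lm: assumes r: "cd r = dm (Bb p4)"
  shows "vv \<cdot> (vv \<cdot> (vv \<cdot> (ep tt \<cdot> (Bb (iv (lV ff)) \<cdot> (Bb p4 \<cdot> r)))))
   = rh tt \<cdot> (T (rV tt) (lV tt) \<cdot> (T V1 V2 \<cdot> (T (dmt C tt ff) (dmt C ff tt) \<cdot> (ep X1 \<cdot> r))))"
proof -
  have r1: "T (rV tt) (lV tt) \<cdot> (T V1 V2 \<cdot> T (dmt C tt ff) (dmt C ff tt))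
     = T vv vv \<cdot> (T (ep tt) (ep tt) \<cdot> T (Bb (iv (la ff))) (Bb (iv (rh ff))))"
    by (simp add: Lm3 Lm4 flip: tar_comp)
  have l2: "ep Y0 \<cdot> (Bb p4 \<cdot> r) = T (Bb (iv (la ff))) (Bb (iv (rh ff))) \<cdot> (ep X1 \<cdot> r)"
    using r by (simp add: rest2[OF Lm2])
  show ?thesis using r
    by (simp add: rest3[OF r1] rest2[OF U4] rest3[OF Lm1] l2)
qed

lemma SDi: "T (dmt C tt ff) (dmt C ff tt) \<cdot> (ep X1 \<cdot> Bb (cmed C ff tt tt ff))
   = cmed C (Bo ff) ff ff (Bo ff) \<cdot> (V (ep (tb (Bo ff) ff)) (ep (tb ff (Bo ff)))
        \<cdot> dmt C (Bo (tb ff (Bo ff))) (Bo (tb (Bo ff) ff)))"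
  using selfdual[where A=ff and B=tt and D=tt and E=ff] unfolding vob_def by simp

lemma Mn: "T V1 V2 \<cdot> cmed C (Bo ff) ff ff (Bo ff) = cmed C tt ff ff tt \<cdot> V (T (ep tt) (ID ff)) (T (ID ff) (ep tt))"
  by (rule med_nat'[symmetric]) simp_all

lemma R1: "dmt C (Bo (tb ff (Bo ff))) (Bo (tb (Bo ff) ff)) \<cdot> Bb (T (lV tt) (rV tt))
    = V (Bb (rV tt)) (Bb (lV tt)) \<cdot> dmt C tt tt"
proof -
  have n1: "lV tt \<cdot> ep (Bo (tb ff (Bo ff))) = ep tt \<cdot> Bb (Bb (lV tt))" by (rule ep_nat') simp_all
  have n2: "rV tt \<cdot> ep (Bo (tb (Bo ff) ff)) = ep tt \<cdot> Bb (Bb (rV tt))" by (rule ep_nat') simp_all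
  have "dmt C (Bo (tb ff (Bo ff))) (Bo (tb (Bo ff) ff)) \<cdot> Bb (T (lV tt) (rV tt))
      = Bb (T (ep tt \<cdot> Bb (Bb (lV tt))) (ep tt \<cdot> Bb (Bb (rV tt))))"
    unfolding dmt_def by (simp add: n1 n2 flip: bar_comp tar_comp)
  also have "\<dots> = Bb (T (Bb (Bb (lV tt))) (Bb (Bb (rV tt)))) \<cdot> Bb (T (ep tt) (ep tt))"
    by (simp add: tar_comp bar_comp)
  also have "\<dots> = V (Bb (rV tt)) (Bb (lV tt)) \<cdot> dmt C tt tt"
    unfolding var_def dmt_def ..
  finally show ?thesis .
qed

lemma R3: "T (ep tt) (ID ff) \<cdot> (ep (tb (Bo ff) ff) \<cdot> Bb (rV tt)) = iv (la ff) \<cdot> uu"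
proof -
  define L where "L = la ff \<cdot> T (ep tt) (ID ff)"
  have Lt[simp]: "dm L = tb (Bo ff) ff" "cd L = ff" "isoC L" unfolding L_def by simp_all
  have bl: "Bb (rV tt) = iv (Bb (Bb L)) \<cdot> Bb (ep tt)"
  proof -
    have 1: "Bb (ep tt \<cdot> iv (Bb L)) = Bb (iv (Bb L)) \<cdot> Bb (ep tt)" by (rule bar_comp) simp
    have 2: "Bb (iv (Bb L)) = iv (Bb (Bb L))" by (rule inv_bar[symmetric]) simp
    show ?thesis unfolding rhoV_def L_def[symmetric] 1 2 ..
  qed
  have n: "ep ff \<cdot> Bb (Bb L) = L \<cdot> ep (tb (Bo ff) ff)" by (rule ep_nat'[symmetric]) simp_all
  have m: "iv L \<cdot> ep ff = ep (tb (Bo ff) ff) \<cdot> iv (Bb (Bb L))" by (rule iso_move[OF _ _ _ _ _ _ n]) simp_all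
  have iL: "iv L = T (iv (ep tt)) (ID ff) \<cdot> iv (la ff)"
    unfolding L_def by (simp add: inv_comp inv_tar)
  have 0: "T (ep tt) (ID ff) \<cdot> T (iv (ep tt)) (ID ff) = ID (tb tt ff)" by (simp flip: tar_comp)
  show ?thesis unfolding bl
    by (simp add: rest2[OF m[symmetric]] iL rest2[OF 0] uu_def)
qed

lemma R4: "T (ID ff) (ep tt) \<cdot> (ep (tb ff (Bo ff)) \<cdot> Bb (lV tt)) = iv (rh ff) \<cdot> uu"
proof -
  define L where "L = rh ff \<cdot> T (ID ff) (ep tt)"
  have Lt[simp]: "dm L = tb ff (Bo ff)" "cd L = ff" "isoC L" unfolding L_def by simp_all
  have bl: "Bb (lV tt) = iv (Bb (Bb L)) \<cdot> Bb (ep tt)"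
  proof -
    have 1: "Bb (ep tt \<cdot> iv (Bb L)) = Bb (iv (Bb L)) \<cdot> Bb (ep tt)" by (rule bar_comp) simp
    have 2: "Bb (iv (Bb L)) = iv (Bb (Bb L))" by (rule inv_bar[symmetric]) simp
    show ?thesis unfolding lamV_def L_def[symmetric] 1 2 ..
  qed
  have n: "ep ff \<cdot> Bb (Bb L) = L \<cdot> ep (tb ff (Bo ff))" by (rule ep_nat'[symmetric]) simp_all
  have m: "iv L \<cdot> ep ff = ep (tb ff (Bo ff)) \<cdot> iv (Bb (Bb L))" by (rule iso_move[OF _ _ _ _ _ _ n]) simp_all
  have iL: "iv L = T (ID ff) (iv (ep tt)) \<cdot> iv (rh ff)"
    unfolding L_def by (simp add: inv_comp inv_tar)
  have 0: "T (ID ff) (ep tt) \<cdot> T (ID ff) (iv (ep tt)) = ID (tb ff tt)" by (simp flip: tar_comp)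
  show ?thesis unfolding bl
    by (simp add: rest2[OF m[symmetric]] iL rest2[OF 0] uu_def)
qed

lemma R5: "V uu uu \<cdot> (dmt C tt tt \<cdot> Bb (rh tt)) = dmt C tt tt \<cdot> (Bb (rh tt) \<cdot> (uu \<cdot> uu))"
proof -
  have a: "T (ep tt) (ep tt) \<cdot> T (Bb uu) (Bb uu) = T vv vv \<cdot> T (ep tt) (ep tt)"
    by (simp add: U3 flip: tar_comp)
  have b: "rh tt \<cdot> (T (ep tt) (ep tt) \<cdot> T (Bb uu) (Bb uu)) = vv \<cdot> (vv \<cdot> (rh tt \<cdot> T (ep tt) (ep tt)))"
    by (simp add: a rest2[OF U4])
  have "V uu uu \<cdot> (dmt C tt tt \<cdot> Bb (rh tt)) = Bb (rh tt \<cdot> (T (ep tt) (ep tt) \<cdot> T (Bb uu) (Bb uu)))"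
    unfolding var_def dmt_def by (simp flip: bar_comp)
  also have "\<dots> = Bb (vv \<cdot> (vv \<cdot> (rh tt \<cdot> T (ep tt) (ep tt))))" by (simp only: b)
  also have "\<dots> = dmt C tt tt \<cdot> (Bb (rh tt) \<cdot> (uu \<cdot> uu))"
    unfolding dmt_def by (simp add: bar_comp Bv)
  finally show ?thesis .
qed

lemma R6: "dmt C tt tt \<cdot> Bb (rh tt) = iv (lV ff) \<cdot> uu"
proof -
  have 1: "dmt C tt tt \<cdot> Bb (rh tt) = Bb (rh tt \<cdot> T (ep tt) (ep tt))"
    unfolding dmt_def by (rule bar_comp[symmetric]) simp
  have 2: "Bb (ep tt \<cdot> R') = Bb R' \<cdot> Bb (ep tt)" by (rule bar_comp) simp
  have 3: "lV ff \<cdot> (dmt C tt tt \<cdot> Bb (rh tt)) = uu"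
    unfolding 1 Lm1' 2 lVff by (simp add: uu_def)
  have "dmt C tt tt \<cdot> Bb (rh tt) = iv (lV ff) \<cdot> (lV ff \<cdot> (dmt C tt tt \<cdot> Bb (rh tt)))" by simp
  also have "\<dots> = iv (lV ff) \<cdot> uu" by (simp only: 3)
  finally show ?thesis .
qed

lemma Rm: "V (T (ep tt) (ID ff)) (T (ID ff) (ep tt)) \<cdot> (V (ep (tb (Bo ff) ff)) (ep (tb ff (Bo ff)))
        \<cdot> (dmt C (Bo (tb ff (Bo ff))) (Bo (tb (Bo ff) ff)) \<cdot> (Bb (T (lV tt) (rV tt)) \<cdot> Bb (rh tt))))
   = V (iv (la ff)) (iv (rh ff)) \<cdot> (iv (lV ff) \<cdot> (uu \<cdot> (uu \<cdot> uu)))"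
proof -
  have c: "V (T (ep tt) (ID ff)) (T (ID ff) (ep tt)) \<cdot> (V (ep (tb (Bo ff) ff)) (ep (tb ff (Bo ff)))
        \<cdot> V (Bb (rV tt)) (Bb (lV tt))) = V (iv (la ff) \<cdot> uu) (iv (rh ff) \<cdot> uu)"
    by (simp add: R3 R4 flip: var_comp)
  have vc: "V (iv (la ff) \<cdot> uu) (iv (rh ff) \<cdot> uu) = V (iv (la ff)) (iv (rh ff)) \<cdot> V uu uu"
    by (rule var_comp) simp_all
  show ?thesis by (simp add: rest2[OF R1] rest3[OF c] vc R5 rest2[OF R6])
qed

lemma Be1: "Bb (e1 C) = Bb (iv (lV ff)) \<cdot> (Bb p4 \<cdot> (Bb (cmed C ff tt tt ff) \<cdot> (Bb (T (lV tt) (rV tt)) \<cdot> Bb (rh tt))))"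
  unfolding e1_def fob_def by (simp add: bar_comp)

lemma e2x: "rh tt \<cdot> (T (rV tt) (lV tt) \<cdot> (cmed C tt ff ff tt \<cdot> (V (iv (la ff)) (iv (rh ff)) \<cdot> iv (lV ff)))) = aa"
  using E2 unfolding e2_def fob_def .

lemma C3: "ep tt \<cdot> Bb aa = aa"
proof -
  have A: "vv \<cdot> (vv \<cdot> (vv \<cdot> (ep tt \<cdot> Bb (e1 C))))
     = (rh tt \<cdot> (T (rV tt) (lV tt) \<cdot> (cmed C tt ff ff tt \<cdot> (V (iv (la ff)) (iv (rh ff)) \<cdot> iv (lV ff)))))
        \<cdot> (uu \<cdot> (uu \<cdot> uu))"
    unfolding Be1 by (simp add: Lm rest3[OF SDi] rest2[OF Mn] Rm)
  also have "\<dots> = aa \<cdot> (uu \<cdot> (uu \<cdot> uu))" by (simp only: e2x)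
  also have "\<dots> = vv \<cdot> (vv \<cdot> (vv \<cdot> aa))"
  proof -
    have u: "aa \<cdot> uu = vv \<cdot> aa" by (rule U2[symmetric]) simp_all
    show ?thesis by (simp add: u rest2[OF u])
  qed
  finally have "vv \<cdot> (vv \<cdot> (vv \<cdot> (ep tt \<cdot> Bb aa))) = vv \<cdot> (vv \<cdot> (vv \<cdot> aa))" by (simp only: E1)
  then have "vv \<cdot> (vv \<cdot> (ep tt \<cdot> Bb aa)) = vv \<cdot> (vv \<cdot> aa)" by (rule iso_cancel_l[rotated 3]) simp_all
  then have "vv \<cdot> (ep tt \<cdot> Bb aa) = vv \<cdot> aa" by (rule iso_cancel_l[rotated 3]) simp_all
  then show ?thesis by (rule iso_cancel_l[rotated 3]) simp_all
qed

lemma PPaa: "PP = aa"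
proof -
  have "ep tt \<cdot> Bb aa = PP" by (simp add: Baa)
  then show ?thesis using C3 by simp
qed

lemma main: "cpi C (fob C) = e1 C \<and> e1 C = e2 C \<and> e2 C = camalg C (tunit C) \<and> single_mixed C"
proof -
  have "camalg C tt = ep tt \<cdot> Bb aa" unfolding camalg_def PPaa ..
  then have am: "camalg C tt = aa" using C3 by simp
  show ?thesis unfolding single_mixed_def fob_def using E1 E2 PPaa am by simp
qed

end

theorem theorem7:
  fixes C :: "('o, 'm) sacat" and F :: "'o \<Rightarrow> 'b::boolean_algebra"
  assumes "B3 C F"
  shows "cpi C (fob C) = e1 C \<and> e1 C = e2 C \<and> e2 C = camalg C (tunit C) \<and> single_mixed C"
  using b3.main[OF b3.intro[OF assms]] .

end
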